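(* Let $G=(U,V,E)$ be a path-restricted ordered bipartite graph, let $P$ be a forward path in $G$, and let $w$ be a vertex of $G$ not on $P$. Then at most one edge of $G$ joins $w$ to a vertex of $P$.
   Context: An ordered bipartite graph is $G=(U,V,E)$ where $U,V$ are disjoint finite sets, each carrying a strict total order (both written $<$), and $E\subseteq U\times V$. A path is a sequence of edges in which consecutive edges share a vertex. A path visiting the vertices of $U$ in the order $u_1,\dots,u_k$ and those of $V$ in the order $v_1,\dots,v_l$ is a forward path if either $u_1<\dots<u_k$ and $v_1<\dots<v_l$, or $u_1>\dots>u_k$ and $v_1>\dots>v_l$. For $x\le y$ in $U$ write $\langle x,y\rangle=\{u\in U: x\le u\le y\}$, and similarly in $V$. If $u_a<u_b$ are the smallest and largest $U$-vertices and $v_c<v_d$ the smallest and largest $V$-vertices of a forward path $P$, the range of $P$ is $\{\langle u_a,u_b\rangle,\langle v_c,v_d\rangle\}$. A vertex of $P$ is non-terminal if it is adjacent along $P$ to two vertices of $P$. An edge is a back edge to $P$ if either it is $(u_a,v_j)$ with $v_j\in\langle v_c,v_d\rangle$ and $v_j>v'$ for some non-terminal vertex $v'\in V$ of $P$, or it is $(u_i,v_c)$ with $u_i\in\langle u_a,u_b\rangle$ and $u_i>u'$ for some non-terminal vertex $u'\in U$ of $P$. $G$ is a path-restricted ordered bipartite graph (PRBG) if no forward path in $G$ has a back edge in $E$. *)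

theory Defs
  imports Main
begin

text \<open>Vertices of G are represented in the sum type 'u + 'v
(Inl u for u in U, Inr v for v in V), which makes U and V disjoint.\<close>

definition obg :: "'u set \<Rightarrow> 'v set \<Rightarrow> ('u \<times> 'v) set \<Rightarrow> bool" where
  "obg U V E \<longleftrightarrow> finite U \<and> finite V \<and> E \<subseteq> U \<times> V"

definition adj :: "('u \<times> 'v) set \<Rightarrow> 'u + 'v \<Rightarrow> 'u + 'v \<Rightarrow> bool" where
  "adj E x y \<longleftrightarrow> (\<exists>u v. (x = Inl u \<and> y = Inr v \<or> x = Inr v \<and> y = Inl u) \<and> (u, v) \<in> E)"

text \<open>A path (a nonempty sequence of edges, consecutive edges sharing a vertex)
is represented by the list of its vertices in the order visited; it has at
least one edge, its vertices are distinct, and consecutive vertices are joined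
by an edge of E.\<close>

definition is_path :: "'u set \<Rightarrow> 'v set \<Rightarrow> ('u \<times> 'v) set \<Rightarrow> ('u + 'v) list \<Rightarrow> bool" where
  "is_path U V E P \<longleftrightarrow> length P \<ge> 2 \<and> distinct P \<and> set P \<subseteq> Inl ` U \<union> Inr ` V
     \<and> (\<forall>i. Suc i < length P \<longrightarrow> adj E (P ! i) (P ! Suc i))"

definition Uverts :: "('u + 'v) list \<Rightarrow> 'u list" where
  "Uverts P = concat (map (\<lambda>x. case x of Inl u \<Rightarrow> [u] | Inr _ \<Rightarrow> []) P)"

definition Vverts :: "('u + 'v) list \<Rightarrow> 'v list" where
  "Vverts P = concat (map (\<lambda>x. case x of Inl _ \<Rightarrow> [] | Inr v \<Rightarrow> [v]) P)"

definition forward_path :: "'u::linorder set \<Rightarrow> 'v::linorder set \<Rightarrow> ('u \<times> 'v) set \<Rightarrow> ('u + 'v) list \<Rightarrow> bool" where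
  "forward_path U V E P \<longleftrightarrow> is_path U V E P \<and>
     ((sorted_wrt (<) (Uverts P) \<and> sorted_wrt (<) (Vverts P)) \<or>
      (sorted_wrt (>) (Uverts P) \<and> sorted_wrt (>) (Vverts P)))"

text \<open>A vertex of P is non-terminal if it is adjacent along P to two vertices of P,
i.e. it occurs at an interior position of the vertex list.\<close>

definition non_terminal :: "('u + 'v) list \<Rightarrow> 'u + 'v \<Rightarrow> bool" where
  "non_terminal P x \<longleftrightarrow> (\<exists>i. 0 < i \<and> Suc i < length P \<and> P ! i = x)"

definition back_edge :: "'u::linorder set \<Rightarrow> 'v::linorder set \<Rightarrow> ('u + 'v) list \<Rightarrow> 'u \<times> 'v \<Rightarrow> bool" where
  "back_edge U V P e \<longleftrightarrow>
     (let ua = Min (set (Uverts P)); ub = Max (set (Uverts P));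
          vc = Min (set (Vverts P)); vd = Max (set (Vverts P)) in
      (fst e = ua \<and> snd e \<in> {v \<in> V. vc \<le> v \<and> v \<le> vd} \<and>
         (\<exists>v'. non_terminal P (Inr v') \<and> v' < snd e)) \<or>
      (snd e = vc \<and> fst e \<in> {u \<in> U. ua \<le> u \<and> u \<le> ub} \<and>
         (\<exists>u'. non_terminal P (Inl u') \<and> u' < fst e)))"

definition PRBG :: "'u::linorder set \<Rightarrow> 'v::linorder set \<Rightarrow> ('u \<times> 'v) set \<Rightarrow> bool" where
  "PRBG U V E \<longleftrightarrow> obg U V E \<and>
     (\<forall>P. forward_path U V E P \<longrightarrow> \<not> (\<exists>e \<in> E. back_edge U V P e))"

end

theory Submission
  imports Defs
begin

lemma Uverts_Cons_gen: "Uverts (x # xs) = (case x of Inl u \<Rightarrow> [u] | Inr _ \<Rightarrow> []) @ Uverts xs"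
  by (simp add: Uverts_def)
lemma Vverts_Cons_gen: "Vverts (x # xs) = (case x of Inl _ \<Rightarrow> [] | Inr v \<Rightarrow> [v]) @ Vverts xs"
  by (simp add: Vverts_def)

lemma UV_simps[simp]: "Uverts [] = []" "Uverts (Inl u # xs) = u # Uverts xs" "Uverts (Inr v # xs) = Uverts xs"
  "Vverts [] = []" "Vverts (Inl u # xs) = Vverts xs" "Vverts (Inr v # xs) = v # Vverts xs"
  "Uverts (xs @ ys) = Uverts xs @ Uverts ys" "Vverts (xs @ ys) = Vverts xs @ Vverts ys"
  by (simp_all add: Uverts_def Vverts_def)

lemma set_Uverts: "set (Uverts xs) = {u. Inl u \<in> set xs}"
  by (induction xs) (auto simp: Uverts_Cons_gen split: sum.splits)
lemma set_Vverts: "set (Vverts xs) = {v. Inr v \<in> set xs}"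
  by (induction xs) (auto simp: Vverts_Cons_gen split: sum.splits)

lemma Uverts_rev: "Uverts (rev xs) = rev (Uverts xs)"
  by (induction xs) (auto simp: Uverts_Cons_gen split: sum.splits)
lemma Vverts_rev: "Vverts (rev xs) = rev (Vverts xs)"
  by (induction xs) (auto simp: Vverts_Cons_gen split: sum.splits)

lemma adj_cases: "adj E x y \<Longrightarrow> (\<exists>u v. x = Inl u \<and> y = Inr v \<and> (u,v) \<in> E) \<or> (\<exists>u v. x = Inr v \<and> y = Inl u \<and> (u,v) \<in> E)"
  by (auto simp: adj_def)
lemma adj_sym: "adj E x y \<Longrightarrow> adj E y x"
  by (auto simp: adj_def)
lemma adj_simps[simp]: "adj E (Inl u) (Inr v) = ((u,v) \<in> E)" "adj E (Inr v) (Inl u) = ((u,v) \<in> E)"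
  "adj E (Inl a) (Inl b) = False" "adj E (Inr c) (Inr d) = False"
  by (auto simp: adj_def)

lemma sorted_split: "sorted_wrt r (xs @ ys) \<Longrightarrow> sorted_wrt r xs \<and> sorted_wrt r ys"
  by (simp add: sorted_wrt_append)

lemma slice_sortedU:
  assumes "sorted_wrt r (Uverts P)"
  shows "sorted_wrt r (Uverts (drop i (take j P)))"
proof -
  have a: "P = take j P @ drop j P" by simp
  have b: "take j P = take i (take j P) @ drop i (take j P)" by (rule append_take_drop_id[symmetric])
  show ?thesis using assms
    by (metis a b UV_simps(7) sorted_split)
qed

lemma slice_sortedV:
  assumes "sorted_wrt r (Vverts P)"
  shows "sorted_wrt r (Vverts (drop i (take j P)))"
proof -
  have a: "P = take j P @ drop j P" by simp
  have b: "take j P = take i (take j P) @ drop i (take j P)" by (rule append_take_drop_id[symmetric])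
  show ?thesis using assms
    by (metis a b UV_simps(8) sorted_split)
qed

lemma slice_forward:
  assumes "forward_path U V E P" "i < j" "j < length P"
  shows "forward_path U V E (drop i (take (Suc j) P))"
proof -
  let ?S = "drop i (take (Suc j) P)"
  have ip: "is_path U V E P" using assms(1) by (simp add: forward_path_def)
  have "is_path U V E ?S"
    unfolding is_path_def
  proof (intro conjI allI impI)
    show "2 \<le> length ?S" using assms by simp
    show "distinct ?S" using ip by (simp add: is_path_def)
    show "set ?S \<subseteq> Inl ` U \<union> Inr ` V" using ip unfolding is_path_def
      by (meson in_set_dropD in_set_takeD subset_iff)
    fix k assume "Suc k < length ?S"
    then show "adj E (?S ! k) (?S ! Suc k)" using ip assms unfolding is_path_def by simp
  qed
  then show ?thesis using assms(1) slice_sortedU slice_sortedV unfolding forward_path_def by blast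
qed

lemma rev_forward:
  assumes "forward_path U V E P"
  shows "forward_path U V E (rev P)"
proof -
  have ip: "is_path U V E P" using assms(1) by (simp add: forward_path_def)
  have "is_path U V E (rev P)"
    unfolding is_path_def
  proof (intro conjI allI impI)
    show "2 \<le> length (rev P)" using ip by (simp add: is_path_def)
    show "distinct (rev P)" using ip by (simp add: is_path_def)
    show "set (rev P) \<subseteq> Inl ` U \<union> Inr ` V" using ip by (simp add: is_path_def)
    fix k assume k: "Suc k < length (rev P)"
    have "adj E (P ! (length P - Suc (Suc k))) (P ! Suc (length P - Suc (Suc k)))"
      using ip k unfolding is_path_def by simp
    moreover have "Suc (length P - Suc (Suc k)) = length P - Suc k" using k by simp
    ultimately show "adj E (rev P ! k) (rev P ! Suc k)" using k
      by (simp add: rev_nth adj_sym)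
  qed
  then show ?thesis using assms unfolding forward_path_def
    by (auto simp: Uverts_rev Vverts_rev sorted_wrt_rev)
qed

lemma hd_min_V:
  fixes c :: "'v::linorder"
  assumes "sorted_wrt (<) (Vverts R)" "R \<noteq> []" "hd R = Inr c" "Inr v \<in> set R"
  shows "c \<le> v"
proof -
  obtain R' where R: "R = Inr c # R'" using assms(2,3) by (cases R) auto
  show ?thesis using assms(1,4) unfolding R by (auto simp: set_Vverts less_imp_le)
qed

lemma minV_eq:
  fixes c :: "'v::linorder"
  assumes "sorted_wrt (<) (Vverts R)" "R \<noteq> []" "hd R = Inr c"
  shows "Min (set (Vverts R)) = c"
proof (rule Min_eqI)
  show "finite (set (Vverts R))" by simp
  show "\<And>y. y \<in> set (Vverts R) \<Longrightarrow> c \<le> y" using hd_min_V[OF assms] by (auto simp: set_Vverts)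
  show "c \<in> set (Vverts R)" using assms(2,3) by (cases R) (auto simp: set_Vverts)
qed


lemma sorted_U_nth:
  assumes "sorted_wrt r (Uverts S)" "i < j" "j < length S" "S ! i = Inl a" "S ! j = Inl b"
  shows "r a b"
proof -
  have sp: "S = take (Suc i) S @ drop (Suc i) S" by simp
  have "take (Suc i) S ! i = Inl a" using assms by simp
  then have "Inl a \<in> set (take (Suc i) S)" using assms by (auto simp: in_set_conv_nth intro!: exI[of _ i])
  then have a: "a \<in> set (Uverts (take (Suc i) S))" by (simp add: set_Uverts)
  have "drop (Suc i) S ! (j - Suc i) = Inl b" using assms by simp
  then have "Inl b \<in> set (drop (Suc i) S)" using assms
    by (metis Suc_leI diff_less_mono length_drop nth_mem)
  then have b: "b \<in> set (Uverts (drop (Suc i) S))" by (simp add: set_Uverts)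
  have "sorted_wrt r (Uverts (take (Suc i) S) @ Uverts (drop (Suc i) S))"
    using assms(1) sp by (metis UV_simps(7))
  then show ?thesis using a b by (simp add: sorted_wrt_append)
qed

lemma coreL:
  fixes U :: "'u::linorder set" and V :: "'v::linorder set" and E :: "('u \<times> 'v) set"
    and S :: "('u + 'v) list"
  assumes prbg: "PRBG U V E" and fp: "forward_path U V E S"
    and incU: "sorted_wrt (<) (Uverts S)" and incV: "sorted_wrt (<) (Vverts S)"
    and hd0: "S ! 0 = Inr c" and lst: "S ! (length S - 1) = Inr d"
    and e1: "(u,c) \<in> E" and e2: "(u,d) \<in> E" and uU: "u \<in> U" and nin: "Inl u \<notin> set S"
  shows False
proof -
  have ip: "is_path U V E S" using fp by (simp add: forward_path_def)
  define n where "n = length S"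
  have n2: "n \<ge> 2" and dist: "distinct S" and sub: "set S \<subseteq> Inl ` U \<union> Inr ` V"
    and adjS: "\<And>i. Suc i < n \<Longrightarrow> adj E (S ! i) (S ! Suc i)"
    using ip by (auto simp: is_path_def n_def)
  have noback: "\<And>R e. forward_path U V E R \<Longrightarrow> e \<in> E \<Longrightarrow> \<not> back_edge U V R e"
    using prbg by (auto simp: PRBG_def)
  have Sne: "S \<noteq> []" using n2 n_def by auto
  have hdS: "hd S = Inr c" using hd0 Sne by (simp add: hd_conv_nth)
  obtain y where S1: "S ! 1 = Inl y"
    using adjS[of 0] n2 hd0 adj_cases by fastforce
  obtain z where Sn2: "S ! (n - 2) = Inl z"
  proof -
    have "adj E (S ! (n-2)) (S ! Suc (n-2))" using adjS[of "n-2"] n2 by simp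
    moreover have "Suc (n-2) = n - 1" using n2 by simp
    ultimately show ?thesis using that lst n_def adj_cases by fastforce
  qed
  have n2pos: "n - 2 > 0"
  proof (rule ccontr)
    assume "\<not> n - 2 > 0" then have "n - 2 = 0" by simp
    then show False using Sn2 hd0 by simp
  qed
  have dinS: "Inr d \<in> set S" using lst n2 n_def by (metis diff_less nth_mem zero_less_numeral less_le_trans zero_less_one)
  have cd: "c < d"
  proof -
    have "c \<le> d" using hd_min_V[OF incV Sne hdS dinS] .
    moreover have "S ! 0 \<noteq> S ! (n - 1)"
    proof
      assume "S ! 0 = S ! (n - 1)"
      moreover have "0 < length S" "n - 1 < length S" using n2 n_def by auto
      ultimately have "0 = n - 1" using nth_eq_iff_index_eq[OF dist] by blast
      then show False using n2 by simp
    qed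
    ultimately show ?thesis using hd0 lst n_def by (auto simp: order.order_iff_strict)
  qed
  have yneq: "y \<noteq> u" using S1 nin n2 n_def by (metis nth_mem less_le_trans one_less_numeral_iff semiring_norm(76))
  show False
  proof (cases "u < y")
    case True
    define R where "R = Inl u # S"
    have allgt: "\<And>x. Inl x \<in> set S \<Longrightarrow> u < x"
    proof -
      fix x assume "Inl x \<in> set S"
      then obtain i where i: "i < n" "S ! i = Inl x" by (auto simp: in_set_conv_nth n_def)
      have "i \<noteq> 0" using i(2) hd0 by (cases "i = 0") auto
      show "u < x"
      proof (cases "i = 1")
        case True then show ?thesis using i S1 \<open>u < y\<close> by simp
      next
        case False
        then have "y < x" using sorted_U_nth[OF incU, of 1 i y x] i S1 \<open>i \<noteq> 0\<close> n_def by simp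
        then show ?thesis using \<open>u < y\<close> by simp
      qed
    qed
    have ipR: "is_path U V E R"
      unfolding is_path_def
    proof (intro conjI allI impI)
      show "2 \<le> length R" using n2 n_def R_def by simp
      show "distinct R" using dist nin R_def by simp
      show "set R \<subseteq> Inl ` U \<union> Inr ` V" using sub uU R_def by auto
      fix k assume k: "Suc k < length R"
      show "adj E (R ! k) (R ! Suc k)"
      proof (cases k)
        case 0 then show ?thesis using hd0 e1 R_def by simp
      next
        case (Suc k') then show ?thesis using adjS[of k'] k R_def n_def by simp
      qed
    qed
    have sU: "sorted_wrt (<) (Uverts R)" using incU allgt R_def by (auto simp: set_Uverts)
    have sV: "sorted_wrt (<) (Vverts R)" using incV R_def by simp
    have fR: "forward_path U V E R" using ipR sU sV by (simp add: forward_path_def)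
    have minU: "Min (set (Uverts R)) = u"
    proof (rule Min_eqI)
      show "finite (set (Uverts R))" by simp
      show "\<And>x. x \<in> set (Uverts R) \<Longrightarrow> u \<le> x" using allgt R_def by (auto simp: set_Uverts less_imp_le)
      show "u \<in> set (Uverts R)" using R_def by simp
    qed
    have dV: "d \<in> V" using dinS sub by auto
    have dset: "d \<in> set (Vverts R)" using dinS R_def by (simp add: set_Vverts)
    have nt: "non_terminal R (Inr c)" unfolding non_terminal_def
      using R_def hd0 n2 n_def by (intro exI[of _ 1]) simp
    have "back_edge U V R (u, d)"
      unfolding back_edge_def Let_def
      using minU dV dset nt cd by (auto intro: Min_le Max_ge)
    then show False using noback[OF fR] e2 by blast
  next
    case False
    then have yu: "y < u" using yneq by simp
    show False
    proof (cases "\<exists>x. Inl x \<in> set S \<and> u < x")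
      case True
      define Q where "Q = (\<lambda>k. k < n \<and> (\<exists>x. S ! k = Inl x \<and> u < x))"
      have exQ: "\<exists>k. Q k" using True by (auto simp: Q_def in_set_conv_nth n_def)
      define k where "k = (LEAST k. Q k)"
      have Qk: "Q k" using LeastI_ex[OF exQ] k_def by simp
      have kmin: "\<And>j. j < k \<Longrightarrow> \<not> Q j" using not_less_Least k_def by blast
      obtain x where kn: "k < n" and Sk: "S ! k = Inl x" and ux: "u < x" using Qk Q_def by auto
      have k0: "k \<noteq> 0" using Sk hd0 by (cases "k = 0") auto
      have k1: "k \<noteq> 1" using Sk S1 yu ux by auto
      obtain v' where Skm1: "S ! (k - 1) = Inr v'"
      proof -
        have "adj E (S ! (k-1)) (S ! Suc (k-1))" using adjS[of "k-1"] kn k0 by simp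
        moreover have "Suc (k-1) = k" using k0 by simp
        ultimately show ?thesis using that Sk adj_cases by fastforce
      qed
      obtain z' where Skm2: "S ! (k - 2) = Inl z'"
      proof -
        have "adj E (S ! (k-2)) (S ! Suc (k-2))" using adjS[of "k-2"] kn k0 k1 by simp
        moreover have "Suc (k-2) = k - 1" using k0 k1 by simp
        ultimately show ?thesis using that Skm1 adj_cases by fastforce
      qed
      have km2: "k - 2 > 0"
      proof (rule ccontr)
        assume "\<not> k - 2 > 0" then have "k - 2 = 0" by simp
        then show False using Skm2 hd0 by simp
      qed
      have z'u: "z' < u"
      proof -
        have "z' \<noteq> u" using Skm2 nin kn n_def by (metis less_imp_diff_less nth_mem)
        moreover have "\<not> u < z'" using kmin[of "k-2"] Skm2 kn k0 Q_def by auto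
        ultimately show ?thesis by simp
      qed
      define R where "R = take (Suc k) S"
      have lR: "length R = Suc k" using kn n_def R_def by simp
      have fR: "forward_path U V E R"
        using slice_forward[OF fp, of 0 k] kn k0 n_def R_def by simp
      have sV: "sorted_wrt (<) (Vverts R)" using slice_sortedV[OF incV, of 0 "Suc k"] R_def by simp
      have Rne: "R \<noteq> []" using lR by auto
      have hdR: "hd R = Inr c" using hd0 Rne R_def by (simp add: hd_conv_nth)
      have minV: "Min (set (Vverts R)) = c" using minV_eq[OF sV Rne hdR] .
      have Rk2: "R ! (k-2) = Inl z'" using Skm2 R_def by simp
      have Rk: "R ! k = Inl x" using Sk R_def by simp
      have z'set: "z' \<in> set (Uverts R)" using Rk2 lR by (metis diff_le_self le_imp_less_Suc mem_Collect_eq nth_mem set_Uverts)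
      have xset: "x \<in> set (Uverts R)" using Rk lR by (metis lessI mem_Collect_eq nth_mem set_Uverts)
      have "Min (set (Uverts R)) \<le> z'" using z'set by (intro Min_le) auto
      then have m1: "Min (set (Uverts R)) \<le> u" using z'u by simp
      have "x \<le> Max (set (Uverts R))" using xset by (intro Max_ge) auto
      then have m2: "u \<le> Max (set (Uverts R))" using ux by simp
      have nt: "non_terminal R (Inl z')" unfolding non_terminal_def
        using Rk2 km2 lR k0 by (intro exI[of _ "k-2"]) simp
      have "back_edge U V R (u, c)"
        unfolding back_edge_def Let_def
        using minV uU m1 m2 nt z'u by auto
      then show False using noback[OF fR] e1 by blast
    next
      case False
      have alllt: "\<And>x. Inl x \<in> set S \<Longrightarrow> x < u"
        using False nin by (metis linorder_neqE)
      define R where "R = S @ [Inl u]"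
      have lR: "length R = Suc n" using R_def n_def by simp
      have ipR: "is_path U V E R"
        unfolding is_path_def
      proof (intro conjI allI impI)
        show "2 \<le> length R" using n2 lR by simp
        show "distinct R" using dist nin R_def by simp
        show "set R \<subseteq> Inl ` U \<union> Inr ` V" using sub uU R_def by auto
        fix k assume k: "Suc k < length R"
        show "adj E (R ! k) (R ! Suc k)"
        proof (cases "Suc k < n")
          case True then show ?thesis using adjS[of k] R_def n_def by (simp add: nth_append)
        next
          case False
          then have "k = n - 1" using k lR by simp
          then show ?thesis using lst e2 R_def n_def n2 Sne by (simp add: nth_append)
        qed
      qed
      have sU: "sorted_wrt (<) (Uverts R)" using incU alllt R_def
        by (auto simp: set_Uverts sorted_wrt_append)
      have sV: "sorted_wrt (<) (Vverts R)" using incV R_def by simp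
      have fR: "forward_path U V E R" using ipR sU sV by (simp add: forward_path_def)
      have Rne: "R \<noteq> []" using R_def by simp
      have hdR: "hd R = Inr c" using hdS Sne R_def by simp
      have minV: "Min (set (Vverts R)) = c" using minV_eq[OF sV Rne hdR] .
      have uset: "u \<in> set (Uverts R)" using R_def by (simp add: set_Uverts)
      have m1: "Min (set (Uverts R)) \<le> u" using uset by (intro Min_le) auto
      have m2: "u \<le> Max (set (Uverts R))" using uset by (intro Max_ge) auto
      have zu: "z < u" using alllt Sn2 n2 n_def by (metis diff_less nth_mem zero_less_numeral less_le_trans zero_less_two)
      have Rz: "R ! (n-2) = Inl z" using Sn2 R_def n2 n_def Sne by (simp add: nth_append)
      have nt: "non_terminal R (Inl z)" unfolding non_terminal_def
        using Rz n2pos lR n2 by (intro exI[of _ "n-2"]) simp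
      have "back_edge U V R (u, c)"
        unfolding back_edge_def Let_def
        using minV uU m1 m2 nt zu by auto
      then show False using noback[OF fR] e1 by blast
    qed
  qed
qed

lemma hd_min_U:
  fixes c :: "'u::linorder"
  assumes "sorted_wrt (<) (Uverts R)" "R \<noteq> []" "hd R = Inl c" "Inl v \<in> set R"
  shows "c \<le> v"
proof -
  obtain R' where R: "R = Inl c # R'" using assms(2,3) by (cases R) auto
  show ?thesis using assms(1,4) unfolding R by (auto simp: set_Uverts less_imp_le)
qed

lemma minU_eq:
  fixes c :: "'u::linorder"
  assumes "sorted_wrt (<) (Uverts R)" "R \<noteq> []" "hd R = Inl c"
  shows "Min (set (Uverts R)) = c"
proof (rule Min_eqI)
  show "finite (set (Uverts R))" by simp
  show "\<And>y. y \<in> set (Uverts R) \<Longrightarrow> c \<le> y" using hd_min_U[OF assms] by (auto simp: set_Uverts)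
  show "c \<in> set (Uverts R)" using assms(2,3) by (cases R) (auto simp: set_Uverts)
qed


lemma sorted_V_nth:
  assumes "sorted_wrt r (Vverts S)" "i < j" "j < length S" "S ! i = Inr a" "S ! j = Inr b"
  shows "r a b"
proof -
  have sp: "S = take (Suc i) S @ drop (Suc i) S" by simp
  have "take (Suc i) S ! i = Inr a" using assms by simp
  then have "Inr a \<in> set (take (Suc i) S)" using assms by (auto simp: in_set_conv_nth intro!: exI[of _ i])
  then have a: "a \<in> set (Vverts (take (Suc i) S))" by (simp add: set_Vverts)
  have "drop (Suc i) S ! (j - Suc i) = Inr b" using assms by simp
  then have "Inr b \<in> set (drop (Suc i) S)" using assms
    by (metis Suc_leI diff_less_mono length_drop nth_mem)
  then have b: "b \<in> set (Vverts (drop (Suc i) S))" by (simp add: set_Vverts)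
  have "sorted_wrt r (Vverts (take (Suc i) S) @ Vverts (drop (Suc i) S))"
    using assms(1) sp by (metis UV_simps(8))
  then show ?thesis using a b by (simp add: sorted_wrt_append)
qed

lemma coreR:
  fixes U :: "'u::linorder set" and V :: "'v::linorder set" and E :: "('u \<times> 'v) set"
    and S :: "('u + 'v) list"
  assumes prbg: "PRBG U V E" and fp: "forward_path U V E S"
    and incV: "sorted_wrt (<) (Vverts S)" and incU: "sorted_wrt (<) (Uverts S)"
    and hd0: "S ! 0 = Inl c" and lst: "S ! (length S - 1) = Inl d"
    and e1: "(c, u) \<in> E" and e2: "(d, u) \<in> E" and uU: "u \<in> V" and nin: "Inr u \<notin> set S"
  shows False
proof -
  have ip: "is_path U V E S" using fp by (simp add: forward_path_def)
  define n where "n = length S"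
  have n2: "n \<ge> 2" and dist: "distinct S" and sub: "set S \<subseteq> Inl ` U \<union> Inr ` V"
    and adjS: "\<And>i. Suc i < n \<Longrightarrow> adj E (S ! i) (S ! Suc i)"
    using ip by (auto simp: is_path_def n_def)
  have noback: "\<And>R e. forward_path U V E R \<Longrightarrow> e \<in> E \<Longrightarrow> \<not> back_edge U V R e"
    using prbg by (auto simp: PRBG_def)
  have Sne: "S \<noteq> []" using n2 n_def by auto
  have hdS: "hd S = Inl c" using hd0 Sne by (simp add: hd_conv_nth)
  obtain y where S1: "S ! 1 = Inr y"
    using adjS[of 0] n2 hd0 adj_cases by fastforce
  obtain z where Sn2: "S ! (n - 2) = Inr z"
  proof -
    have "adj E (S ! (n-2)) (S ! Suc (n-2))" using adjS[of "n-2"] n2 by simp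
    moreover have "Suc (n-2) = n - 1" using n2 by simp
    ultimately show ?thesis using that lst n_def adj_cases by fastforce
  qed
  have n2pos: "n - 2 > 0"
  proof (rule ccontr)
    assume "\<not> n - 2 > 0" then have "n - 2 = 0" by simp
    then show False using Sn2 hd0 by simp
  qed
  have dinS: "Inl d \<in> set S" using lst n2 n_def by (metis diff_less nth_mem zero_less_numeral less_le_trans zero_less_one)
  have cd: "c < d"
  proof -
    have "c \<le> d" using hd_min_U[OF incU Sne hdS dinS] .
    moreover have "S ! 0 \<noteq> S ! (n - 1)"
    proof
      assume "S ! 0 = S ! (n - 1)"
      moreover have "0 < length S" "n - 1 < length S" using n2 n_def by auto
      ultimately have "0 = n - 1" using nth_eq_iff_index_eq[OF dist] by blast
      then show False using n2 by simp
    qed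
    ultimately show ?thesis using hd0 lst n_def by (auto simp: order.order_iff_strict)
  qed
  have yneq: "y \<noteq> u" using S1 nin n2 n_def by (metis nth_mem less_le_trans one_less_numeral_iff semiring_norm(76))
  show False
  proof (cases "u < y")
    case True
    define R where "R = Inr u # S"
    have allgt: "\<And>x. Inr x \<in> set S \<Longrightarrow> u < x"
    proof -
      fix x assume "Inr x \<in> set S"
      then obtain i where i: "i < n" "S ! i = Inr x" by (auto simp: in_set_conv_nth n_def)
      have "i \<noteq> 0" using i(2) hd0 by (cases "i = 0") auto
      show "u < x"
      proof (cases "i = 1")
        case True then show ?thesis using i S1 \<open>u < y\<close> by simp
      next
        case False
        then have "y < x" using sorted_V_nth[OF incV, of 1 i y x] i S1 \<open>i \<noteq> 0\<close> n_def by simp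
        then show ?thesis using \<open>u < y\<close> by simp
      qed
    qed
    have ipR: "is_path U V E R"
      unfolding is_path_def
    proof (intro conjI allI impI)
      show "2 \<le> length R" using n2 n_def R_def by simp
      show "distinct R" using dist nin R_def by simp
      show "set R \<subseteq> Inl ` U \<union> Inr ` V" using sub uU R_def by auto
      fix k assume k: "Suc k < length R"
      show "adj E (R ! k) (R ! Suc k)"
      proof (cases k)
        case 0 then show ?thesis using hd0 e1 R_def by simp
      next
        case (Suc k') then show ?thesis using adjS[of k'] k R_def n_def by simp
      qed
    qed
    have sU: "sorted_wrt (<) (Vverts R)" using incV allgt R_def by (auto simp: set_Vverts)
    have sV: "sorted_wrt (<) (Uverts R)" using incU R_def by simp
    have fR: "forward_path U V E R" using ipR sU sV by (simp add: forward_path_def)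
    have minU: "Min (set (Vverts R)) = u"
    proof (rule Min_eqI)
      show "finite (set (Vverts R))" by simp
      show "\<And>x. x \<in> set (Vverts R) \<Longrightarrow> u \<le> x" using allgt R_def by (auto simp: set_Vverts less_imp_le)
      show "u \<in> set (Vverts R)" using R_def by simp
    qed
    have dV: "d \<in> U" using dinS sub by auto
    have dset: "d \<in> set (Uverts R)" using dinS R_def by (simp add: set_Uverts)
    have nt: "non_terminal R (Inl c)" unfolding non_terminal_def
      using R_def hd0 n2 n_def by (intro exI[of _ 1]) simp
    have "back_edge U V R (d, u)"
      unfolding back_edge_def Let_def
      using minU dV dset nt cd by (auto intro: Min_le Max_ge)
    then show False using noback[OF fR] e2 by blast
  next
    case False
    then have yu: "y < u" using yneq by simp
    show False
    proof (cases "\<exists>x. Inr x \<in> set S \<and> u < x")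
      case True
      define Q where "Q = (\<lambda>k. k < n \<and> (\<exists>x. S ! k = Inr x \<and> u < x))"
      have exQ: "\<exists>k. Q k" using True by (auto simp: Q_def in_set_conv_nth n_def)
      define k where "k = (LEAST k. Q k)"
      have Qk: "Q k" using LeastI_ex[OF exQ] k_def by simp
      have kmin: "\<And>j. j < k \<Longrightarrow> \<not> Q j" using not_less_Least k_def by blast
      obtain x where kn: "k < n" and Sk: "S ! k = Inr x" and ux: "u < x" using Qk Q_def by auto
      have k0: "k \<noteq> 0" using Sk hd0 by (cases "k = 0") auto
      have k1: "k \<noteq> 1" using Sk S1 yu ux by auto
      obtain v' where Skm1: "S ! (k - 1) = Inl v'"
      proof -
        have "adj E (S ! (k-1)) (S ! Suc (k-1))" using adjS[of "k-1"] kn k0 by simp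
        moreover have "Suc (k-1) = k" using k0 by simp
        ultimately show ?thesis using that Sk adj_cases by fastforce
      qed
      obtain z' where Skm2: "S ! (k - 2) = Inr z'"
      proof -
        have "adj E (S ! (k-2)) (S ! Suc (k-2))" using adjS[of "k-2"] kn k0 k1 by simp
        moreover have "Suc (k-2) = k - 1" using k0 k1 by simp
        ultimately show ?thesis using that Skm1 adj_cases by fastforce
      qed
      have km2: "k - 2 > 0"
      proof (rule ccontr)
        assume "\<not> k - 2 > 0" then have "k - 2 = 0" by simp
        then show False using Skm2 hd0 by simp
      qed
      have z'u: "z' < u"
      proof -
        have "z' \<noteq> u" using Skm2 nin kn n_def by (metis less_imp_diff_less nth_mem)
        moreover have "\<not> u < z'" using kmin[of "k-2"] Skm2 kn k0 Q_def by auto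
        ultimately show ?thesis by simp
      qed
      define R where "R = take (Suc k) S"
      have lR: "length R = Suc k" using kn n_def R_def by simp
      have fR: "forward_path U V E R"
        using slice_forward[OF fp, of 0 k] kn k0 n_def R_def by simp
      have sV: "sorted_wrt (<) (Uverts R)" using slice_sortedU[OF incU, of 0 "Suc k"] R_def by simp
      have Rne: "R \<noteq> []" using lR by auto
      have hdR: "hd R = Inl c" using hd0 Rne R_def by (simp add: hd_conv_nth)
      have minV: "Min (set (Uverts R)) = c" using minU_eq[OF sV Rne hdR] .
      have Rk2: "R ! (k-2) = Inr z'" using Skm2 R_def by simp
      have Rk: "R ! k = Inr x" using Sk R_def by simp
      have z'set: "z' \<in> set (Vverts R)" using Rk2 lR by (metis diff_le_self le_imp_less_Suc mem_Collect_eq nth_mem set_Vverts)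
      have xset: "x \<in> set (Vverts R)" using Rk lR by (metis lessI mem_Collect_eq nth_mem set_Vverts)
      have "Min (set (Vverts R)) \<le> z'" using z'set by (intro Min_le) auto
      then have m1: "Min (set (Vverts R)) \<le> u" using z'u by simp
      have "x \<le> Max (set (Vverts R))" using xset by (intro Max_ge) auto
      then have m2: "u \<le> Max (set (Vverts R))" using ux by simp
      have nt: "non_terminal R (Inr z')" unfolding non_terminal_def
        using Rk2 km2 lR k0 by (intro exI[of _ "k-2"]) simp
      have "back_edge U V R (c, u)"
        unfolding back_edge_def Let_def
        using minV uU m1 m2 nt z'u by auto
      then show False using noback[OF fR] e1 by blast
    next
      case False
      have alllt: "\<And>x. Inr x \<in> set S \<Longrightarrow> x < u"
        using False nin by (metis linorder_neqE)
      define R where "R = S @ [Inr u]"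
      have lR: "length R = Suc n" using R_def n_def by simp
      have ipR: "is_path U V E R"
        unfolding is_path_def
      proof (intro conjI allI impI)
        show "2 \<le> length R" using n2 lR by simp
        show "distinct R" using dist nin R_def by simp
        show "set R \<subseteq> Inl ` U \<union> Inr ` V" using sub uU R_def by auto
        fix k assume k: "Suc k < length R"
        show "adj E (R ! k) (R ! Suc k)"
        proof (cases "Suc k < n")
          case True then show ?thesis using adjS[of k] R_def n_def by (simp add: nth_append)
        next
          case False
          then have "k = n - 1" using k lR by simp
          then show ?thesis using lst e2 R_def n_def n2 Sne by (simp add: nth_append)
        qed
      qed
      have sU: "sorted_wrt (<) (Vverts R)" using incV alllt R_def
        by (auto simp: set_Vverts sorted_wrt_append)
      have sV: "sorted_wrt (<) (Uverts R)" using incU R_def by simp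
      have fR: "forward_path U V E R" using ipR sU sV by (simp add: forward_path_def)
      have Rne: "R \<noteq> []" using R_def by simp
      have hdR: "hd R = Inl c" using hdS Sne R_def by simp
      have minV: "Min (set (Uverts R)) = c" using minU_eq[OF sV Rne hdR] .
      have uset: "u \<in> set (Vverts R)" using R_def by (simp add: set_Vverts)
      have m1: "Min (set (Vverts R)) \<le> u" using uset by (intro Min_le) auto
      have m2: "u \<le> Max (set (Vverts R))" using uset by (intro Max_ge) auto
      have zu: "z < u" using alllt Sn2 n2 n_def by (metis diff_less nth_mem zero_less_numeral less_le_trans zero_less_two)
      have Rz: "R ! (n-2) = Inr z" using Sn2 R_def n2 n_def Sne by (simp add: nth_append)
      have nt: "non_terminal R (Inr z)" unfolding non_terminal_def
        using Rz n2pos lR n2 by (intro exI[of _ "n-2"]) simp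
      have "back_edge U V R (c, u)"
        unfolding back_edge_def Let_def
        using minV uU m1 m2 nt zu by auto
      then show False using noback[OF fR] e1 by blast
    qed
  qed
qed

lemma core_any:
  fixes U :: "'u::linorder set" and V :: "'v::linorder set" and E :: "('u \<times> 'v) set"
    and S :: "('u + 'v) list"
  assumes prbg: "PRBG U V E" and fp: "forward_path U V E S"
    and incU: "sorted_wrt (<) (Uverts S)" and incV: "sorted_wrt (<) (Vverts S)"
    and a1: "adj E w (S ! 0)" and a2: "adj E w (S ! (length S - 1))"
    and wv: "w \<in> Inl ` U \<union> Inr ` V" and nin: "w \<notin> set S"
  shows False
proof (cases w)
  case (Inl u)
  obtain c where c: "S ! 0 = Inr c" "(u,c) \<in> E" using a1 Inl adj_cases by fastforce
  obtain d where d: "S ! (length S - 1) = Inr d" "(u,d) \<in> E" using a2 Inl adj_cases by fastforce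
  have "u \<in> U" using wv Inl by auto
  then show False using coreL[OF prbg fp incU incV c(1) d(1) c(2) d(2)] nin Inl by simp
next
  case (Inr v)
  obtain c where c: "S ! 0 = Inl c" "(c,v) \<in> E" using a1 Inr adj_cases by fastforce
  obtain d where d: "S ! (length S - 1) = Inl d" "(d,v) \<in> E" using a2 Inr adj_cases by fastforce
  have "v \<in> V" using wv Inr by auto
  then show False using coreR[OF prbg fp incV incU c(1) d(1) c(2) d(2)] nin Inr by simp
qed

lemma two_nb:
  fixes U :: "'u::linorder set" and V :: "'v::linorder set" and E :: "('u \<times> 'v) set"
    and P :: "('u + 'v) list"
  assumes prbg: "PRBG U V E" and fp: "forward_path U V E P"
    and wv: "w \<in> Inl ` U \<union> Inr ` V" and nin: "w \<notin> set P"
    and ij: "i < j" "j < length P" and a1: "adj E w (P ! i)" and a2: "adj E w (P ! j)"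
  shows False
proof -
  define S where "S = drop i (take (Suc j) P)"
  have fS: "forward_path U V E S" using slice_forward[OF fp ij] S_def by simp
  have lS: "length S = Suc j - i" using S_def ij by simp
  have S0: "S ! 0 = P ! i" using S_def ij by simp
  have Sl: "S ! (length S - 1) = P ! j" using S_def ij lS by simp
  have ninS: "w \<notin> set S" using nin S_def by (meson in_set_dropD in_set_takeD)
  from fS have "(sorted_wrt (<) (Uverts S) \<and> sorted_wrt (<) (Vverts S)) \<or>
      (sorted_wrt (>) (Uverts S) \<and> sorted_wrt (>) (Vverts S))" by (simp add: forward_path_def)
  then show False
  proof
    assume inc: "sorted_wrt (<) (Uverts S) \<and> sorted_wrt (<) (Vverts S)"
    show False using core_any[OF prbg fS _ _ _ _ wv ninS] inc S0 Sl a1 a2 by simp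
  next
    assume dec: "sorted_wrt (>) (Uverts S) \<and> sorted_wrt (>) (Vverts S)"
    define T where "T = rev S"
    have fT: "forward_path U V E T" using rev_forward[OF fS] T_def by simp
    have incT: "sorted_wrt (<) (Uverts T)" "sorted_wrt (<) (Vverts T)"
      using dec T_def by (auto simp: Uverts_rev Vverts_rev sorted_wrt_rev)
    have lpos: "length S > 0" using lS ij by simp
    have T0: "T ! 0 = P ! j" using T_def Sl lpos by (simp add: rev_nth)
    have Tl: "T ! (length T - 1) = P ! i" using T_def S0 lpos by (simp add: rev_nth)
    have ninT: "w \<notin> set T" using ninS T_def by simp
    show False using core_any[OF prbg fT incT _ _ wv ninT] T0 Tl a1 a2 by simp
  qed
qed

theorem corollary1:
  fixes U :: "'u::linorder set" and V :: "'v::linorder set" and E :: "('u \<times> 'v) set"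
    and P :: "('u + 'v) list" and w :: "'u + 'v"
  assumes "PRBG U V E"
    and "forward_path U V E P"
    and "w \<in> Inl ` U \<union> Inr ` V"
    and "w \<notin> set P"
  shows "card {x \<in> set P. adj E w x} \<le> 1"
proof -
  have "\<forall>a\<in>{x \<in> set P. adj E w x}. \<forall>b\<in>{x \<in> set P. adj E w x}. a = b"
  proof (intro ballI)
    fix a b assume a: "a \<in> {x \<in> set P. adj E w x}" and b: "b \<in> {x \<in> set P. adj E w x}"
    obtain i where i: "i < length P" "P ! i = a" using a by (auto simp: in_set_conv_nth)
    obtain j where j: "j < length P" "P ! j = b" using b by (auto simp: in_set_conv_nth)
    have ai: "adj E w (P ! i)" "adj E w (P ! j)" using a b i j by auto
    show "a = b"
    proof (cases i j rule: linorder_cases)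
      case less then show ?thesis using two_nb[OF assms less j(1) ai] by simp
    next
      case equal then show ?thesis using i j by simp
    next
      case greater then show ?thesis using two_nb[OF assms greater i(1) ai(2) ai(1)] by simp
    qed
  qed
  then show ?thesis by (simp add: card_le_Suc0_iff_eq)
qed

end
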